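(* For any complex numbers $a,b,\alpha,\beta,\xi,\eta$ with $\beta a-\alpha b\neq0$, any natural number $n\ge1$, and any integer $k\ge0$ (with $k\le\lfloor n/2\rfloor$ in the first identity and $k\le\lfloor (n-1)/2\rfloor$ in the second), \[ \sum_{r=k}^{\lfloor n/2\rfloor}\binom{r}{k}\Psi\left(\begin{array}{cc|c} a & b & n \\ \alpha & \beta & r \end{array}\right)\xi^{\lfloor n/2\rfloor-r}\eta^{r-k}=\Psi\left(\begin{array}{cc|c} a\xi-\alpha\eta & b\xi-\beta\eta & n \\ \alpha & \beta & k \end{array}\right), \] \[ \sum_{r=k}^{\lfloor (n-1)/2\rfloor}\binom{r}{k}\Phi\left(\begin{array}{cc|c} a & b & n \\ \alpha & \beta & r \end{array}\right)\xi^{\lfloor (n-1)/2\rfloor-r}\eta^{r-k}=\Phi\left(\begin{array}{cc|c} a\xi-\alpha\eta & b\xi-\beta\eta & n \\ \alpha & \beta & k \end{array}\right). \]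
   Context: $\delta(m)=1$ for $m$ odd, $0$ for $m$ even; $\lfloor\cdot\rfloor$ is the floor. For indeterminates $a,b,\alpha,\beta$ and $n\ge1$, $\Psi\left(\begin{array}{cc|c} a & b & n \\ \alpha & \beta & r \end{array}\right)$ ($0\le r\le\lfloor n/2\rfloor$) and $\Phi\left(\begin{array}{cc|c} a & b & n \\ \alpha & \beta & r \end{array}\right)$ ($0\le r\le\lfloor (n-1)/2\rfloor$) are the unique polynomials in $\mathbb{Z}[a,b,\alpha,\beta]$ such that, identically in $x,y$, $(\beta a-\alpha b)^{\lfloor n/2\rfloor}\frac{x^n+y^n}{(x+y)^{\delta(n)}}=\sum_{r}\Psi\left(\begin{array}{cc|c} a & b & n \\ \alpha & \beta & r \end{array}\right)(\alpha x^2+\beta xy+\alpha y^2)^{\lfloor n/2\rfloor-r}(ax^2+bxy+ay^2)^r$ and $(\beta a-\alpha b)^{\lfloor (n-1)/2\rfloor}\frac{x^n-y^n}{(x-y)(x+y)^{\delta(n-1)}}=\sum_{r}\Phi\left(\begin{array}{cc|c} a & b & n \\ \alpha & \beta & r \end{array}\right)(\alpha x^2+\beta xy+\alpha y^2)^{\lfloor (n-1)/2\rfloor-r}(ax^2+bxy+ay^2)^r$; for numerical arguments these polynomials are evaluated. *)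

theory Defs
  imports Complex_Main
begin

text \<open>Polynomials in Z[a,b,alpha,beta] are represented by their finitely supported
  coefficient functions (exponent tuple (i,j,k,l) for a^i b^j alpha^k beta^l).\<close>

type_synonym mpoly4 = "nat \<times> nat \<times> nat \<times> nat \<Rightarrow> int"

definition mp_eval :: "mpoly4 \<Rightarrow> complex \<Rightarrow> complex \<Rightarrow> complex \<Rightarrow> complex \<Rightarrow> complex" where
  "mp_eval e a b al be =
     (\<Sum>(i,j,k,l)\<in>{t. e t \<noteq> 0}. of_int (e (i,j,k,l)) * a^i * b^j * al^k * be^l)"

text \<open>The defining identities, with the exact quotient by (x+y)^delta resp.
  (x-y)(x+y)^delta multiplied out; a polynomial identity over Z is the same as
  an identity of evaluations at all complex points.\<close>

definition is_Psi_family :: "nat \<Rightarrow> (nat \<Rightarrow> mpoly4) \<Rightarrow> bool" where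
  "is_Psi_family n c \<longleftrightarrow>
     (\<forall>r. finite {t. c r t \<noteq> 0}) \<and> (\<forall>r. n div 2 < r \<longrightarrow> c r = (\<lambda>_. 0)) \<and>
     (\<forall>a b al be x y :: complex.
        (be*a - al*b)^(n div 2) * (x^n + y^n) =
        (x+y)^(n mod 2) * (\<Sum>r\<le>n div 2. mp_eval (c r) a b al be *
            (al*x^2 + be*x*y + al*y^2)^(n div 2 - r) * (a*x^2 + b*x*y + a*y^2)^r))"

definition is_Phi_family :: "nat \<Rightarrow> (nat \<Rightarrow> mpoly4) \<Rightarrow> bool" where
  "is_Phi_family n c \<longleftrightarrow>
     (\<forall>r. finite {t. c r t \<noteq> 0}) \<and> (\<forall>r. (n - 1) div 2 < r \<longrightarrow> c r = (\<lambda>_. 0)) \<and>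
     (\<forall>a b al be x y :: complex.
        (be*a - al*b)^((n - 1) div 2) * (x^n - y^n) =
        (x - y) * (x+y)^((n - 1) mod 2) * (\<Sum>r\<le>(n - 1) div 2. mp_eval (c r) a b al be *
            (al*x^2 + be*x*y + al*y^2)^((n - 1) div 2 - r) * (a*x^2 + b*x*y + a*y^2)^r))"

definition Psi :: "nat \<Rightarrow> nat \<Rightarrow> complex \<Rightarrow> complex \<Rightarrow> complex \<Rightarrow> complex \<Rightarrow> complex" where
  "Psi n r a b al be = mp_eval ((THE c. is_Psi_family n c) r) a b al be"

definition Phi :: "nat \<Rightarrow> nat \<Rightarrow> complex \<Rightarrow> complex \<Rightarrow> complex \<Rightarrow> complex \<Rightarrow> complex" where
  "Phi n r a b al be = mp_eval ((THE c. is_Phi_family n c) r) a b al be"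

end

theory Submission
  imports Defs "HOL-Computational_Algebra.Polynomial"
begin

definition mmono :: "nat\<times>nat\<times>nat\<times>nat \<Rightarrow> complex \<Rightarrow> complex \<Rightarrow> complex \<Rightarrow> complex \<Rightarrow> complex" where
  "mmono t a b al be = (case t of (i,j,k,l) \<Rightarrow> a^i * b^j * al^k * be^l)"

lemma mp_eval_mmono: "mp_eval e a b al be = (\<Sum>t\<in>{t. e t \<noteq> 0}. of_int (e t) * mmono t a b al be)"
  unfolding mp_eval_def mmono_def
  by (rule sum.cong) (auto split: prod.splits)

lemma mp_eval_sup:
  assumes "finite S" "{t. e t \<noteq> 0} \<subseteq> S"
  shows "mp_eval e a b al be = (\<Sum>t\<in>S. of_int (e t) * mmono t a b al be)"
  unfolding mp_eval_mmono
  by (rule sum.mono_neutral_left) (use assms in auto)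

definition polyR :: "(complex \<Rightarrow> complex \<Rightarrow> complex \<Rightarrow> complex \<Rightarrow> complex) \<Rightarrow> bool" where
  "polyR f \<longleftrightarrow> (\<exists>e. finite {t. e t \<noteq> 0} \<and> (\<forall>a b al be. f a b al be = mp_eval e a b al be))"

lemma polyR_intro: "finite {t. e t \<noteq> 0} \<Longrightarrow> (\<And>a b al be. f a b al be = mp_eval e a b al be) \<Longrightarrow> polyR f"
  unfolding polyR_def by blast

lemma polyR_const: "polyR (\<lambda>a b al be. of_int z)"
proof -
  let ?e = "\<lambda>t. if t = (0,0,0,0) then z else 0"
  have "finite {t. ?e t \<noteq> 0}" by (rule finite_subset[of _ "{(0,0,0,0)}"]) auto
  moreover have "of_int z = mp_eval ?e a b al be" for a b al be
    by (subst mp_eval_sup[of "{(0,0,0,0)}"]) (auto simp: mmono_def)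
  ultimately show ?thesis by (rule polyR_intro)
qed

lemma polyR_zero: "polyR (\<lambda>a b al be. 0)"
  using polyR_const[of 0] by simp

lemma polyR_mmono: "polyR (\<lambda>a b al be. mmono t a b al be)"
proof -
  let ?e = "\<lambda>s. if s = t then 1 else 0::int"
  have "finite {s. ?e s \<noteq> 0}" by (rule finite_subset[of _ "{t}"]) auto
  moreover have "mmono t a b al be = mp_eval ?e a b al be" for a b al be
    by (subst mp_eval_sup[of "{t}"]) auto
  ultimately show ?thesis by (rule polyR_intro)
qed

lemma polyR_a: "polyR (\<lambda>a b al be. a)" using polyR_mmono[of "(1,0,0,0)"] by (simp add: mmono_def)
lemma polyR_b: "polyR (\<lambda>a b al be. b)" using polyR_mmono[of "(0,1,0,0)"] by (simp add: mmono_def)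
lemma polyR_al: "polyR (\<lambda>a b al be. al)" using polyR_mmono[of "(0,0,1,0)"] by (simp add: mmono_def)
lemma polyR_be: "polyR (\<lambda>a b al be. be)" using polyR_mmono[of "(0,0,0,1)"] by (simp add: mmono_def)

lemma polyR_add: assumes "polyR f" "polyR g" shows "polyR (\<lambda>a b al be. f a b al be + g a b al be)"
proof -
  obtain e1 where e1: "finite {t. e1 t \<noteq> 0}" "\<And>a b al be. f a b al be = mp_eval e1 a b al be"
    using assms(1) unfolding polyR_def by blast
  obtain e2 where e2: "finite {t. e2 t \<noteq> 0}" "\<And>a b al be. g a b al be = mp_eval e2 a b al be"
    using assms(2) unfolding polyR_def by blast
  let ?S = "{t. e1 t \<noteq> 0} \<union> {t. e2 t \<noteq> 0}"
  let ?e = "\<lambda>t. e1 t + e2 t"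
  have fin: "finite ?S" using e1 e2 by auto
  have sub: "{t. ?e t \<noteq> 0} \<subseteq> ?S" by auto
  have "f a b al be + g a b al be = mp_eval ?e a b al be" for a b al be
  proof -
    have "f a b al be = (\<Sum>t\<in>?S. of_int (e1 t) * mmono t a b al be)"
      using e1 mp_eval_sup[OF fin, of e1] by auto
    moreover have "g a b al be = (\<Sum>t\<in>?S. of_int (e2 t) * mmono t a b al be)"
      using e2 mp_eval_sup[OF fin, of e2] by auto
    moreover have "mp_eval ?e a b al be = (\<Sum>t\<in>?S. of_int (?e t) * mmono t a b al be)"
      using mp_eval_sup[OF fin sub] by auto
    ultimately show ?thesis by (simp add: sum.distrib distrib_right)
  qed
  then show ?thesis using finite_subset[OF sub fin] by (intro polyR_intro[of ?e])
qed

lemma polyR_neg: assumes "polyR f" shows "polyR (\<lambda>a b al be. - f a b al be)"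
proof -
  obtain e1 where e1: "finite {t. e1 t \<noteq> 0}" "\<And>a b al be. f a b al be = mp_eval e1 a b al be"
    using assms(1) unfolding polyR_def by blast
  have "- f a b al be = mp_eval (\<lambda>t. - e1 t) a b al be" for a b al be
    unfolding e1 mp_eval_mmono by (simp add: sum_negf)
  moreover have "finite {t. - e1 t \<noteq> 0}" using e1 by simp
  ultimately show ?thesis by (intro polyR_intro[of "\<lambda>t. - e1 t"])
qed

lemma polyR_diff: assumes "polyR f" "polyR g" shows "polyR (\<lambda>a b al be. f a b al be - g a b al be)"
  using polyR_add[OF assms(1) polyR_neg[OF assms(2)]] by simp

definition tadd :: "nat\<times>nat\<times>nat\<times>nat \<Rightarrow> nat\<times>nat\<times>nat\<times>nat \<Rightarrow> nat\<times>nat\<times>nat\<times>nat" where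
  "tadd s t = (case s of (i,j,k,l) \<Rightarrow> case t of (i',j',k',l') \<Rightarrow> (i+i',j+j',k+k',l+l'))"

lemma mmono_tadd: "mmono (tadd s t) a b al be = mmono s a b al be * mmono t a b al be"
  unfolding mmono_def tadd_def by (auto split: prod.splits simp: power_add)

lemma polyR_mult: assumes "polyR f" "polyR g" shows "polyR (\<lambda>a b al be. f a b al be * g a b al be)"
proof -
  obtain e1 where e1: "finite {t. e1 t \<noteq> 0}" "\<And>a b al be. f a b al be = mp_eval e1 a b al be"
    using assms(1) unfolding polyR_def by blast
  obtain e2 where e2: "finite {t. e2 t \<noteq> 0}" "\<And>a b al be. g a b al be = mp_eval e2 a b al be"
    using assms(2) unfolding polyR_def by blast
  define S1 where "S1 = {t. e1 t \<noteq> 0}"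
  define S2 where "S2 = {t. e2 t \<noteq> 0}"
  define G where "G = (\<lambda>p. tadd (fst p) (snd p))"
  define T where "T = G ` (S1 \<times> S2)"
  define e where "e = (\<lambda>t. \<Sum>p\<in>{p \<in> S1 \<times> S2. G p = t}. e1 (fst p) * e2 (snd p))"
  have finS: "finite (S1 \<times> S2)" using e1 e2 S1_def S2_def by auto
  have finT: "finite T" unfolding T_def using finS by auto
  have sub: "{t. e t \<noteq> 0} \<subseteq> T"
  proof
    fix t assume "t \<in> {t. e t \<noteq> 0}"
    then have "e t \<noteq> 0" by simp
    show "t \<in> T"
    proof (rule ccontr)
      assume "t \<notin> T"
      then have E: "{p \<in> S1 \<times> S2. G p = t} = {}" unfolding T_def by blast
      have "e t = 0" unfolding e_def E by simp
      then show False using \<open>e t \<noteq> 0\<close> by simp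
    qed
  qed
  have "f a b al be * g a b al be = mp_eval e a b al be" for a b al be
  proof -
    let ?h = "\<lambda>p. (of_int (e1 (fst p)) * mmono (fst p) a b al be) * (of_int (e2 (snd p)) * mmono (snd p) a b al be)"
    have "mp_eval e a b al be = (\<Sum>t\<in>T. of_int (e t) * mmono t a b al be)"
      using mp_eval_sup[OF finT sub] .
    also have "\<dots> = (\<Sum>t\<in>T. \<Sum>p\<in>{p \<in> S1 \<times> S2. G p = t}. ?h p)"
    proof (rule sum.cong[OF refl])
      fix t assume "t \<in> T"
      have "of_int (e t) * mmono t a b al be = (\<Sum>p\<in>{p \<in> S1 \<times> S2. G p = t}. of_int (e1 (fst p) * e2 (snd p)) * mmono t a b al be)"
        unfolding e_def of_int_sum sum_distrib_right ..
      also have "\<dots> = (\<Sum>p\<in>{p \<in> S1 \<times> S2. G p = t}. ?h p)"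
        by (rule sum.cong[OF refl]) (auto simp: G_def mmono_tadd)
      finally show "of_int (e t) * mmono t a b al be = (\<Sum>p\<in>{p \<in> S1 \<times> S2. G p = t}. ?h p)" .
    qed
    also have "\<dots> = sum ?h (S1 \<times> S2)"
      by (rule sum.group[OF finS finT]) (auto simp: T_def)
    also have "\<dots> = (\<Sum>s\<in>S1. of_int (e1 s) * mmono s a b al be) * (\<Sum>s\<in>S2. of_int (e2 s) * mmono s a b al be)"
      unfolding sum_product sum.cartesian_product by (simp add: case_prod_beta)
    also have "\<dots> = f a b al be * g a b al be"
      unfolding e1(2) e2(2) mp_eval_mmono S1_def S2_def ..
    finally show ?thesis ..
  qed
  then show ?thesis using finite_subset[OF sub finT] by (intro polyR_intro[of e])
qed

definition qf :: "complex \<Rightarrow> complex \<Rightarrow> complex \<Rightarrow> complex \<Rightarrow> complex" where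
  "qf c d x y = c*x^2 + d*x*y + c*y^2"

definition Form :: "nat \<Rightarrow> (complex \<Rightarrow> complex \<Rightarrow> complex \<Rightarrow> complex \<Rightarrow> complex \<Rightarrow> complex \<Rightarrow> complex) \<Rightarrow> bool" where
  "Form m H \<longleftrightarrow> (\<exists>F. (\<forall>r. polyR (F r)) \<and>
     (\<forall>a b al be x y. H a b al be x y = (\<Sum>r\<le>m. F r a b al be * qf al be x y^(m-r) * qf a b x y^r)))"

lemma Form_intro:
  "(\<And>r. polyR (F r)) \<Longrightarrow> (\<And>a b al be x y. H a b al be x y = (\<Sum>r\<le>m. F r a b al be * qf al be x y^(m-r) * qf a b x y^r)) \<Longrightarrow> Form m H"
  unfolding Form_def by blast

lemma Form_elim:
  assumes "Form m H"
  obtains F where "\<And>r. polyR (F r)" "\<And>a b al be x y. H a b al be x y = (\<Sum>r\<le>m. F r a b al be * qf al be x y^(m-r) * qf a b x y^r)"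
proof -
  from assms obtain F where "\<forall>r. polyR (F r)" "\<forall>a b al be x y. H a b al be x y = (\<Sum>r\<le>m. F r a b al be * qf al be x y^(m-r) * qf a b x y^r)"
    unfolding Form_def by blast
  then show ?thesis using that by blast
qed

lemma Form_const: "polyR c \<Longrightarrow> Form 0 (\<lambda>a b al be x y. c a b al be)"
  by (rule Form_intro[of "\<lambda>r. c"]) auto

lemma Form_add: assumes "Form m H1" "Form m H2" shows "Form m (\<lambda>a b al be x y. H1 a b al be x y + H2 a b al be x y)"
proof -
  obtain F1 where F1: "\<And>r. polyR (F1 r)" "\<And>a b al be x y. H1 a b al be x y = (\<Sum>r\<le>m. F1 r a b al be * qf al be x y^(m-r) * qf a b x y^r)"
    using Form_elim[OF assms(1)] by blast
  obtain F2 where F2: "\<And>r. polyR (F2 r)" "\<And>a b al be x y. H2 a b al be x y = (\<Sum>r\<le>m. F2 r a b al be * qf al be x y^(m-r) * qf a b x y^r)"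
    using Form_elim[OF assms(2)] by blast
  show ?thesis
    by (rule Form_intro[of "\<lambda>r a b al be. F1 r a b al be + F2 r a b al be"])
       (auto intro: polyR_add F1 F2 simp: F1(2) F2(2) sum.distrib distrib_right)
qed

lemma Form_diff: assumes "Form m H1" "Form m H2" shows "Form m (\<lambda>a b al be x y. H1 a b al be x y - H2 a b al be x y)"
proof -
  obtain F1 where F1: "\<And>r. polyR (F1 r)" "\<And>a b al be x y. H1 a b al be x y = (\<Sum>r\<le>m. F1 r a b al be * qf al be x y^(m-r) * qf a b x y^r)"
    using Form_elim[OF assms(1)] by blast
  obtain F2 where F2: "\<And>r. polyR (F2 r)" "\<And>a b al be x y. H2 a b al be x y = (\<Sum>r\<le>m. F2 r a b al be * qf al be x y^(m-r) * qf a b x y^r)"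
    using Form_elim[OF assms(2)] by blast
  show ?thesis
    by (rule Form_intro[of "\<lambda>r a b al be. F1 r a b al be - F2 r a b al be"])
       (auto intro: polyR_diff F1 F2 simp: F1(2) F2(2) sum_subtractf left_diff_distrib)
qed

lemma Form_lin:
  assumes c1: "polyR c1" and c2: "polyR c2" and H: "Form m H"
  shows "Form (Suc m) (\<lambda>a b al be x y. (c1 a b al be * qf a b x y + c2 a b al be * qf al be x y) * H a b al be x y)"
proof -
  obtain F where F: "\<And>r. polyR (F r)" "\<And>a b al be x y. H a b al be x y = (\<Sum>r\<le>m. F r a b al be * qf al be x y^(m-r) * qf a b x y^r)"
    using Form_elim[OF H] by blast
  define G where "G = (\<lambda>r a b al be. (if r \<le> m then c2 a b al be * F r a b al be else 0) +
                                     (if r = 0 then 0 else c1 a b al be * F (r - 1) a b al be))"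
  have pG: "polyR (G r)" for r
    unfolding G_def
    by (cases "r \<le> m"; cases "r = 0") (auto intro!: polyR_add polyR_mult c1 c2 F polyR_zero)
  show ?thesis
  proof (rule Form_intro[OF pG])
    fix a b al be x y
    let ?Q = "qf al be x y" and ?P = "qf a b x y"
    let ?C1 = "c1 a b al be" and ?C2 = "c2 a b al be"
    have s1: "(\<Sum>r\<le>Suc m. (if r \<le> m then ?C2 * F r a b al be else 0) * ?Q^(Suc m - r) * ?P^r)
        = (\<Sum>r\<le>m. F r a b al be * ?Q^(m-r) * ?P^r) * (?C2 * ?Q)"
      unfolding sum.atMost_Suc sum_distrib_right
      by (auto intro!: sum.cong simp: Suc_diff_le)
    have s2: "(\<Sum>r\<le>Suc m. (if r = 0 then 0 else ?C1 * F (r - 1) a b al be) * ?Q^(Suc m - r) * ?P^r)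
        = (\<Sum>r\<le>m. F r a b al be * ?Q^(m-r) * ?P^r) * (?C1 * ?P)"
      unfolding sum.atMost_Suc_shift sum_distrib_right
      by (auto intro!: sum.cong)
    have "(\<Sum>r\<le>Suc m. G r a b al be * ?Q^(Suc m - r) * ?P^r)
        = (\<Sum>r\<le>Suc m. (if r \<le> m then ?C2 * F r a b al be else 0) * ?Q^(Suc m - r) * ?P^r)
          + (\<Sum>r\<le>Suc m. (if r = 0 then 0 else ?C1 * F (r - 1) a b al be) * ?Q^(Suc m - r) * ?P^r)"
      unfolding G_def sum.distrib[symmetric] by (rule sum.cong) (auto simp: distrib_right)
    also have "\<dots> = (?C1 * ?P + ?C2 * ?Q) * H a b al be x y"
      unfolding s1 s2 F(2) by (simp add: algebra_simps)
    finally show "(?C1 * ?P + ?C2 * ?Q) * H a b al be x y = (\<Sum>r\<le>Suc m. G r a b al be * ?Q^(Suc m - r) * ?P^r)" ..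
  qed
qed

lemma Form_cong: "Form m H \<Longrightarrow> (\<And>a b al be x y. H' a b al be x y = H a b al be x y) \<Longrightarrow> Form m H'"
proof -
  assume "Form m H" "\<And>a b al be x y. H' a b al be x y = H a b al be x y"
  then have "H' = H" by (intro ext) auto
  then show ?thesis using \<open>Form m H\<close> by simp
qed

definition Wm :: "nat \<Rightarrow> (complex \<Rightarrow> complex \<Rightarrow> complex) \<Rightarrow> bool" where
  "Wm m s \<longleftrightarrow> Form m (\<lambda>a b al be x y. (be*a - al*b)^m * s x y)"

lemma Wm_const: "Wm 0 (\<lambda>x y. of_int z)"
  unfolding Wm_def using Form_const[OF polyR_const[of z]] by simp

lemma Wm_u: assumes "Wm m s" shows "Wm (Suc m) (\<lambda>x y. (x^2+y^2) * s x y)"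
proof -
  have "Form (Suc m) (\<lambda>a b al be x y. (be * qf a b x y + (- b) * qf al be x y) * ((be*a - al*b)^m * s x y))"
    using Form_lin[OF polyR_be polyR_neg[OF polyR_b] assms[unfolded Wm_def]] .
  then show ?thesis unfolding Wm_def
    by (rule Form_cong) (simp add: qf_def algebra_simps power2_eq_square)
qed

lemma Wm_v: assumes "Wm m s" shows "Wm (Suc m) (\<lambda>x y. (x*y) * s x y)"
proof -
  have "Form (Suc m) (\<lambda>a b al be x y. ((- al) * qf a b x y + a * qf al be x y) * ((be*a - al*b)^m * s x y))"
    using Form_lin[OF polyR_neg[OF polyR_al] polyR_a assms[unfolded Wm_def]] .
  then show ?thesis unfolding Wm_def
    by (rule Form_cong) (simp add: qf_def algebra_simps power2_eq_square)
qed

lemma Wm_add: "Wm m s1 \<Longrightarrow> Wm m s2 \<Longrightarrow> Wm m (\<lambda>x y. s1 x y + s2 x y)"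
  unfolding Wm_def by (drule (1) Form_add) (simp add: distrib_left)

lemma Wm_diff: "Wm m s1 \<Longrightarrow> Wm m s2 \<Longrightarrow> Wm m (\<lambda>x y. s1 x y - s2 x y)"
  unfolding Wm_def by (drule (1) Form_diff) (simp add: right_diff_distrib)

fun lrec :: "(complex \<Rightarrow> complex \<Rightarrow> complex) \<Rightarrow> (complex \<Rightarrow> complex \<Rightarrow> complex) \<Rightarrow> nat \<Rightarrow> complex \<Rightarrow> complex \<Rightarrow> complex" where
  "lrec c0 c1 0 x y = c0 x y"
| "lrec c0 c1 (Suc 0) x y = c1 x y"
| "lrec c0 c1 (Suc (Suc m)) x y = (x^2+y^2) * lrec c0 c1 (Suc m) x y - (x*y) * ((x*y) * lrec c0 c1 m x y)"

lemma Wm_lrec: assumes "Wm 0 c0" "Wm 1 c1" shows "Wm m (lrec c0 c1 m)"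
proof -
  have "Wm m (lrec c0 c1 m) \<and> Wm (Suc m) (lrec c0 c1 (Suc m))"
  proof (induction m)
    case 0 then show ?case using assms by (simp add: lrec.simps[abs_def] del: lrec.simps)
  next
    case (Suc m)
    then have "Wm (Suc (Suc m)) (\<lambda>x y. (x^2+y^2) * lrec c0 c1 (Suc m) x y - (x*y) * ((x*y) * lrec c0 c1 m x y))"
      by (intro Wm_diff Wm_u Wm_v) auto
    then show ?case using Suc by (simp add: lrec.simps(3)[abs_def] del: lrec.simps)
  qed
  then show ?thesis by simp
qed

lemma lrec_eq:
  assumes rec: "\<And>m. A (Suc (Suc m)) = (x^2+y^2) * A (Suc m) - (x*y) * ((x*y) * A m)"
    and "A 0 = w * c0 x y" "A 1 = w * c1 x y"
  shows "A m = w * lrec c0 c1 m x y"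
proof -
  have "A m = w * lrec c0 c1 m x y \<and> A (Suc m) = w * lrec c0 c1 (Suc m) x y"
  proof (induction m)
    case 0 then show ?case using assms by simp
  next
    case (Suc m) then show ?case using rec[of m] by (simp add: algebra_simps)
  qed
  then show ?thesis by simp
qed

lemma univ:
  fixes c :: "nat \<Rightarrow> complex"
  assumes fin: "finite T" and ex: "finite {z. (\<Sum>i\<in>T. c i * z^i) \<noteq> 0}"
  shows "\<forall>i\<in>T. c i = 0"
proof -
  define p where "p = (\<Sum>i\<in>T. monom (c i) i)"
  have ev: "poly p z = (\<Sum>i\<in>T. c i * z^i)" for z unfolding p_def by (simp add: poly_sum poly_monom)
  have "p = 0"
  proof (rule ccontr)
    assume "p \<noteq> 0"
    then have "finite {z. poly p z = 0}" by (rule poly_roots_finite)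
    then have "finite ({z. poly p z = 0} \<union> {z. (\<Sum>i\<in>T. c i * z^i) \<noteq> 0})" using ex by simp
    moreover have "{z. poly p z = 0} \<union> {z. (\<Sum>i\<in>T. c i * z^i) \<noteq> 0} = UNIV" using ev by auto
    ultimately show False using infinite_UNIV_char_0[where 'a=complex] by simp
  qed
  have "coeff p i = (if i \<in> T then c i else 0)" for i
    unfolding p_def coeff_sum coeff_monom using fin by (simp add: sum.delta)
  then show ?thesis using \<open>p = 0\<close> by (metis coeff_0)
qed

lemma univ_all:
  fixes c :: "nat \<Rightarrow> complex"
  assumes fin: "finite T" and ex: "\<And>z. (\<Sum>i\<in>T. z^i * c i) = 0"
  shows "\<forall>i\<in>T. c i = 0"
  by (rule univ[OF fin]) (use ex in \<open>simp add: mult.commute\<close>)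

lemma gen:
  fixes h :: "nat \<times> 'a \<Rightarrow> complex"
  assumes fin: "finite S" and ex: "\<And>z. (\<Sum>p\<in>S. z^(fst p) * h p) = 0"
  shows "(\<Sum>t\<in>{t. (i,t)\<in>S}. h (i,t)) = 0"
proof -
  have finB: "finite {t. (j,t)\<in>S}" for j
    by (rule finite_subset[of _ "snd ` S"]) (use fin in force)+
  have Seq: "S = Sigma (fst ` S) (\<lambda>j. {t. (j,t)\<in>S})" by force
  have "(\<Sum>j\<in>fst ` S. z^j * (\<Sum>t\<in>{t. (j,t)\<in>S}. h (j,t))) = 0" for z
  proof -
    have "(\<Sum>j\<in>fst ` S. z^j * (\<Sum>t\<in>{t. (j,t)\<in>S}. h (j,t)))
        = (\<Sum>j\<in>fst ` S. \<Sum>t\<in>{t. (j,t)\<in>S}. z^(fst (j,t)) * h (j,t))"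
      by (simp add: sum_distrib_left)
    also have "\<dots> = (\<Sum>p\<in>Sigma (fst ` S) (\<lambda>j. {t. (j,t)\<in>S}). z^(fst p) * h p)"
      by (subst sum.Sigma) (use fin finB in \<open>auto simp: case_prod_beta\<close>)
    also have "\<dots> = 0" using ex Seq by simp
    finally show ?thesis .
  qed
  from univ_all[OF _ this] fin have *: "\<forall>j\<in>fst ` S. (\<Sum>t\<in>{t. (j,t)\<in>S}. h (j,t)) = 0" by simp
  show ?thesis
  proof (cases "i \<in> fst ` S")
    case True then show ?thesis using * by blast
  next
    case False then have "{t. (i,t)\<in>S} = {}" by force
    then show ?thesis by simp
  qed
qed

lemma mp_zero:
  assumes fin: "finite {t. e t \<noteq> 0}" and z: "\<And>a b al be. mp_eval e a b al be = 0"
  shows "e t0 = 0"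
proof (rule ccontr)
  assume ne: "e t0 \<noteq> 0"
  obtain i0 j0 k0 l0 where t0: "t0 = (i0,j0,k0,l0)" by (cases t0) auto
  define S where "S = {t. e t \<noteq> 0}"
  have finS: "finite S" using fin S_def by simp
  have L1: "(\<Sum>t\<in>{t. (i,t)\<in>S}. of_int (e (i,t)) * mmono (0,t) 1 b al be) = 0" for i b al be
  proof -
    have Z: "(\<Sum>p\<in>S. z^(fst p) * (\<lambda>p. of_int (e (fst p, snd p)) * mmono (0, snd p) 1 b al be) p) = 0" for z :: complex
    proof -
    have "(\<Sum>p\<in>S. z^(fst p) * (of_int (e (fst p, snd p)) * mmono (0, snd p) 1 b al be))
        = (\<Sum>p\<in>S. of_int (e p) * mmono p z b al be)"
      by (rule sum.cong) (auto simp: mmono_def split: prod.splits)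
    also have "\<dots> = 0" using z[of z b al be] unfolding mp_eval_mmono S_def .
    finally show ?thesis by simp
    qed
    show ?thesis using gen[OF finS Z, of i] by simp
  qed
  define S1 where "S1 = {t. (i0,t)\<in>S}"
  have finS1: "finite S1" unfolding S1_def
    by (rule finite_subset[of _ "snd ` S"]) (use finS in force)+
  have L2: "(\<Sum>t\<in>{t. (j,t)\<in>S1}. of_int (e (i0,j,t)) * mmono (0,0,t) 1 1 al be) = 0" for j al be
  proof -
    have Z: "(\<Sum>p\<in>S1. z^(fst p) * (\<lambda>p. of_int (e (i0, fst p, snd p)) * mmono (0, 0, snd p) 1 1 al be) p) = 0" for z :: complex
    proof -
    have "(\<Sum>p\<in>S1. z^(fst p) * (of_int (e (i0, fst p, snd p)) * mmono (0, 0, snd p) 1 1 al be))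
        = (\<Sum>t\<in>{t. (i0,t)\<in>S}. of_int (e (i0,t)) * mmono (0,t) 1 z al be)"
      unfolding S1_def by (rule sum.cong) (auto simp: mmono_def split: prod.splits)
    also have "\<dots> = 0" by (rule L1)
    finally show ?thesis by simp
    qed
    show ?thesis using gen[OF finS1 Z, of j] by simp
  qed
  define S2 where "S2 = {t. (j0,t)\<in>S1}"
  have finS2: "finite S2" unfolding S2_def
    by (rule finite_subset[of _ "snd ` S1"]) (use finS1 in force)+
  have L3: "(\<Sum>t\<in>{t. (k,t)\<in>S2}. of_int (e (i0,j0,k,t)) * be^t) = 0" for k and be :: complex
  proof -
    have Z: "(\<Sum>p\<in>S2. z^(fst p) * (\<lambda>p. of_int (e (i0, j0, fst p, snd p)) * be^(snd p)) p) = 0" for z :: complex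
    proof -
    have "(\<Sum>p\<in>S2. z^(fst p) * (of_int (e (i0, j0, fst p, snd p)) * be^(snd p)))
        = (\<Sum>t\<in>{t. (j0,t)\<in>S1}. of_int (e (i0,j0,t)) * mmono (0,0,t) 1 1 z be)"
      unfolding S2_def by (rule sum.cong) (auto simp: mmono_def split: prod.splits)
    also have "\<dots> = 0" by (rule L2)
    finally show ?thesis by simp
    qed
    show ?thesis using gen[OF finS2 Z, of k] by simp
  qed
  define S3 where "S3 = {t. (k0,t)\<in>S2}"
  have finS3: "finite S3" unfolding S3_def
    by (rule finite_subset[of _ "snd ` S2"]) (use finS2 in force)+
  have "\<forall>l\<in>S3. of_int (e (i0,j0,k0,l)) = (0::complex)"
    by (rule univ_all[OF finS3]) (use L3 in \<open>simp add: S3_def mult.commute\<close>)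
  moreover have "l0 \<in> S3" using ne t0 unfolding S3_def S2_def S1_def S_def by simp
  ultimately show False using ne t0 by simp
qed

lemma cont_zero:
  fixes g :: "complex \<Rightarrow> complex"
  assumes fin: "finite X" and z: "\<And>t. t \<notin> X \<Longrightarrow> g t = 0" and c: "continuous (at w) g"
  shows "g w = 0"
proof -
  have "eventually (\<lambda>t. \<forall>y\<in>X. t \<noteq> y) (at w)"
    using fin by (intro eventually_ball_finite) (auto intro: eventually_neq_at_within)
  then have "eventually (\<lambda>t. g t = 0) (at w)"
    by eventually_elim (use z in auto)
  then have l0: "(g \<longlongrightarrow> 0) (at w)" by (rule tendsto_eventually)
  have l1: "(g \<longlongrightarrow> g w) (at w)" using c by (simp add: continuous_at)
  show ?thesis using tendsto_unique[OF at_neq_bot l1 l0] .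
qed

lemma lin_finite:
  fixes c1 c0 :: complex
  assumes "c1 \<noteq> 0 \<or> c0 \<noteq> 0"
  shows "finite {p. c1*p + c0 = 0}"
proof (cases "c1 = 0")
  case True then show ?thesis using assms by simp
next
  case False
  have "p = - c0 / c1" if "c1*p + c0 = 0" for p
  proof -
    have "c1*p = - c0" using that by (simp add: eq_neg_iff_add_eq_0)
    then show ?thesis using False by (simp add: field_simps)
  qed
  then have "{p. c1*p + c0 = 0} \<subseteq> {- c0 / c1}" by auto
  then show ?thesis by (rule finite_subset) simp
qed

definition Wcond :: "(complex \<Rightarrow> complex \<Rightarrow> complex) \<Rightarrow> bool" where
  "Wcond W \<longleftrightarrow> (\<forall>x y. x + y \<noteq> 0 \<longrightarrow> x - y \<noteq> 0 \<longrightarrow> W x y \<noteq> 0)"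

lemma core:
  fixes A B al be :: complex and e :: "nat \<Rightarrow> complex"
  assumes D: "be*A - al*B \<noteq> 0" and W: "Wcond W"
    and H: "\<And>x y. W x y * (\<Sum>r\<le>m. e r * (al*x^2+be*x*y+al*y^2)^(m-r) * (A*x^2+B*x*y+A*y^2)^r) = 0"
  shows "\<forall>r\<le>m. e r = 0"
proof -
  let ?D = "be*A - al*B"
  define E where "E = {p. (be - 2*al)*p + (2*A - B) = 0} \<union> {p. (be + 2*al)*p + (- B - 2*A) = 0}"
  have n1: "be - 2*al \<noteq> 0 \<or> 2*A - B \<noteq> 0"
  proof (rule ccontr)
    assume "\<not> ?thesis"
    then have "be = 2*al" "B = 2*A" by auto
    then show False using D by (simp add: algebra_simps)
  qed
  have n2: "be + 2*al \<noteq> 0 \<or> - B - 2*A \<noteq> 0"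
  proof (rule ccontr)
    assume "\<not> ?thesis"
    then have h1: "be + 2*al = 0" and h2: "- B - 2*A = 0" by auto
    from h1 have "be = -(2*al)" by (simp add: eq_neg_iff_add_eq_0)
    moreover from h2 have "B = -(2*A)" by (metis add.inverse_inverse diff_0 diff_minus_eq_add eq_iff_diff_eq_0 minus_diff_eq)
    ultimately have "be = -(2*al)" "B = -(2*A)" by auto
    then show False using D by (simp add: algebra_simps)
  qed
  have finE: "finite E" unfolding E_def using lin_finite[OF n1] lin_finite[OF n2] by simp
  have key: "(\<Sum>r\<in>{..m}. e r * p^r) = 0" if pE: "p \<notin> E" for p
  proof -
    define u where "u = (be*p - B) / ?D"
    define v where "v = (A - al*p) / ?D"
    have up: "u + 2*v = ((be - 2*al)*p + (2*A - B)) / ?D"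
    proof -
      have "u + 2*v = ((be*p - B) + 2*(A - al*p))/?D" unfolding u_def v_def by (simp add: add_divide_distrib)
      moreover have "(be*p - B) + 2*(A - al*p) = (be - 2*al)*p + (2*A - B)" by (simp add: algebra_simps)
      ultimately show ?thesis by simp
    qed
    have um: "u - 2*v = ((be + 2*al)*p + (- B - 2*A)) / ?D"
    proof -
      have "u - 2*v = ((be*p - B) - 2*(A - al*p))/?D" unfolding u_def v_def by (simp add: diff_divide_distrib)
      moreover have "(be*p - B) - 2*(A - al*p) = (be + 2*al)*p + (- B - 2*A)" by (simp add: algebra_simps)
      ultimately show ?thesis by simp
    qed
    have up0: "u + 2*v \<noteq> 0" using pE D unfolding up E_def by auto
    have um0: "u - 2*v \<noteq> 0" using pE D unfolding um E_def by auto
    define s where "s = csqrt (u + 2*v)"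
    define d where "d = csqrt (u - 2*v)"
    have s2: "s^2 = u + 2*v" unfolding s_def by simp
    have d2: "d^2 = u - 2*v" unfolding d_def by simp
    define x where "x = (s + d)/2"
    define y where "y = (s - d)/2"
    have xy1: "x + y = s" unfolding x_def y_def by (simp add: field_simps)
    have xy2: "x - y = d" unfolding x_def y_def by (simp add: field_simps)
    have s0: "s \<noteq> 0" using s2 up0 by auto
    have d0: "d \<noteq> 0" using d2 um0 by auto
    have Wn: "W x y \<noteq> 0" using W xy1 xy2 s0 d0 unfolding Wcond_def by auto
    have uu: "x^2 + y^2 = u"
    proof -
      have "x^2 + y^2 = (s^2 + d^2)/2" unfolding x_def y_def by (simp add: field_simps power2_eq_square)
      then show ?thesis using s2 d2 by simp
    qed
    have vv: "x*y = v"
    proof -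
      have "x*y = (s^2 - d^2)/4" unfolding x_def y_def by (simp add: field_simps power2_eq_square)
      then show ?thesis using s2 d2 by simp
    qed
    have Q1: "al*x^2+be*x*y+al*y^2 = 1"
    proof -
      have "al*x^2+be*x*y+al*y^2 = al*(x^2+y^2) + be*(x*y)" by (simp add: algebra_simps)
      also have "\<dots> = al*u + be*v" using uu vv by simp
      also have "\<dots> = (al*(be*p - B) + be*(A - al*p)) / ?D" unfolding u_def v_def by (simp add: add_divide_distrib)
      also have "al*(be*p - B) + be*(A - al*p) = ?D" by (simp add: algebra_simps)
      also have "?D / ?D = 1" using D by simp
      finally show ?thesis .
    qed
    have Pp: "A*x^2+B*x*y+A*y^2 = p"
    proof -
      have "A*x^2+B*x*y+A*y^2 = A*(x^2+y^2) + B*(x*y)" by (simp add: algebra_simps)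
      also have "\<dots> = A*u + B*v" using uu vv by simp
      also have "\<dots> = (A*(be*p - B) + B*(A - al*p)) / ?D" unfolding u_def v_def by (simp add: add_divide_distrib)
      also have "A*(be*p - B) + B*(A - al*p) = p * ?D" by (simp add: algebra_simps)
      also have "p * ?D / ?D = p" using D by simp
      finally show ?thesis .
    qed
    have "W x y * (\<Sum>r\<le>m. e r * p^r) = 0" using H[of x y] unfolding Q1 Pp by simp
    then show ?thesis using Wn by simp
  qed
  have "finite {p. (\<Sum>r\<in>{..m}. e r * p^r) \<noteq> 0}"
    by (rule finite_subset[OF _ finE]) (use key in auto)
  then show ?thesis using univ[of "{..m}" e] by simp
qed

definition gfam :: "nat \<Rightarrow> (complex\<Rightarrow>complex\<Rightarrow>complex) \<Rightarrow> (complex\<Rightarrow>complex\<Rightarrow>complex) \<Rightarrow> (nat \<Rightarrow> mpoly4) \<Rightarrow> bool" where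
  "gfam m W F c \<longleftrightarrow> (\<forall>r. finite {t. c r t \<noteq> 0}) \<and> (\<forall>r. m < r \<longrightarrow> c r = (\<lambda>_. 0)) \<and>
     (\<forall>a b al be x y :: complex. (be*a - al*b)^m * F x y =
        W x y * (\<Sum>r\<le>m. mp_eval (c r) a b al be * (al*x^2 + be*x*y + al*y^2)^(m - r) * (a*x^2 + b*x*y + a*y^2)^r))"

lemma Psi_gfam: "is_Psi_family n c = gfam (n div 2) (\<lambda>x y. (x+y)^(n mod 2)) (\<lambda>x y. x^n + y^n) c"
  unfolding is_Psi_family_def gfam_def by simp

lemma Phi_gfam: "is_Phi_family n c = gfam ((n - 1) div 2) (\<lambda>x y. (x - y) * (x+y)^((n - 1) mod 2)) (\<lambda>x y. x^n - y^n) c"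
  unfolding is_Phi_family_def gfam_def by simp

lemma gfam_ex:
  assumes "Wm m s" "\<And>x y. F x y = W x y * s x y"
  shows "\<exists>c. gfam m W F c"
proof -
  obtain G where G: "\<And>r. polyR (G r)"
    "\<And>a b al be x y. (be*a - al*b)^m * s x y = (\<Sum>r\<le>m. G r a b al be * qf al be x y^(m-r) * qf a b x y^r)"
    using Form_elim[OF assms(1)[unfolded Wm_def]] by blast
  have "\<forall>r. \<exists>e. finite {t. e t \<noteq> 0} \<and> (\<forall>a b al be. G r a b al be = mp_eval e a b al be)"
    using G(1) unfolding polyR_def by blast
  then obtain E where E: "\<And>r. finite {t. E r t \<noteq> 0}" "\<And>r a b al be. G r a b al be = mp_eval (E r) a b al be"
    by metis
  define c where "c r = (if r \<le> m then E r else (\<lambda>_. 0))" for r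
  have "gfam m W F c"
    unfolding gfam_def
  proof (intro conjI allI impI)
    fix r show "finite {t. c r t \<noteq> 0}" using E(1) by (simp add: c_def)
  next
    fix r assume "m < r" then show "c r = (\<lambda>_. 0)" by (simp add: c_def)
  next
    fix a b al be x y :: complex
    have "(be*a - al*b)^m * F x y = W x y * ((be*a - al*b)^m * s x y)" using assms(2) by simp
    also have "\<dots> = W x y * (\<Sum>r\<le>m. mp_eval (c r) a b al be * (al*x^2 + be*x*y + al*y^2)^(m - r) * (a*x^2 + b*x*y + a*y^2)^r)"
      unfolding G(2) by (auto intro!: sum.cong arg_cong[where f="\<lambda>z. W x y * z"] simp: c_def E(2) qf_def)
    finally show "(be*a - al*b)^m * F x y = W x y * (\<Sum>r\<le>m. mp_eval (c r) a b al be * (al*x^2 + be*x*y + al*y^2)^(m - r) * (a*x^2 + b*x*y + a*y^2)^r)" .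
  qed
  then show ?thesis by blast
qed

lemma mp_eval_diff:
  assumes f1: "finite {t. e1 t \<noteq> 0}" and f2: "finite {t. e2 t \<noteq> 0}"
  shows "mp_eval (\<lambda>t. e1 t - e2 t) a b al be = mp_eval e1 a b al be - mp_eval e2 a b al be"
proof -
  let ?S = "{t. e1 t \<noteq> 0} \<union> {t. e2 t \<noteq> 0}"
  have fin: "finite ?S" using f1 f2 by auto
  have "mp_eval e1 a b al be = (\<Sum>t\<in>?S. of_int (e1 t) * mmono t a b al be)"
    by (rule mp_eval_sup[OF fin]) auto
  moreover have "mp_eval e2 a b al be = (\<Sum>t\<in>?S. of_int (e2 t) * mmono t a b al be)"
    by (rule mp_eval_sup[OF fin]) auto
  moreover have "mp_eval (\<lambda>t. e1 t - e2 t) a b al be = (\<Sum>t\<in>?S. of_int (e1 t - e2 t) * mmono t a b al be)"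
    by (rule mp_eval_sup[OF fin]) auto
  ultimately show ?thesis by (simp add: sum_subtractf left_diff_distrib)
qed

lemma cont_mp:
  assumes "continuous F f1" "continuous F f2" "continuous F f3" "continuous F f4"
  shows "continuous F (\<lambda>z. mp_eval e (f1 z) (f2 z) (f3 z) (f4 z))"
  unfolding mp_eval_mmono
proof (intro continuous_sum)
  fix t :: "nat\<times>nat\<times>nat\<times>nat"
  obtain i j k l where t: "t = (i,j,k,l)" by (cases t) auto
  show "continuous F (\<lambda>z. of_int (e t) * mmono t (f1 z) (f2 z) (f3 z) (f4 z))"
    unfolding t mmono_def by (simp, intro continuous_intros assms)
qed

lemma gfam_unique:
  assumes c1: "gfam m W F c1" and c2: "gfam m W F c2" and Wc: "Wcond W"
  shows "c1 = c2"
proof (intro ext)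
  fix r t
  have fin1: "finite {t. c1 q t \<noteq> 0}" for q using c1 unfolding gfam_def by blast
  have fin2: "finite {t. c2 q t \<noteq> 0}" for q using c2 unfolding gfam_def by blast
  have eq1: "(be*a - al*b)^m * F x y = W x y * (\<Sum>r\<le>m. mp_eval (c1 r) a b al be * (al*x^2 + be*x*y + al*y^2)^(m - r) * (a*x^2 + b*x*y + a*y^2)^r)" for a b al be x y
    using c1 unfolding gfam_def by blast
  have eq2: "(be*a - al*b)^m * F x y = W x y * (\<Sum>r\<le>m. mp_eval (c2 r) a b al be * (al*x^2 + be*x*y + al*y^2)^(m - r) * (a*x^2 + b*x*y + a*y^2)^r)" for a b al be x y
    using c2 unfolding gfam_def by blast
  show "c1 r t = c2 r t"
  proof (cases "m < r")
    case True then show ?thesis using c1 c2 unfolding gfam_def by simp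
  next
    case False
    define e where "e = (\<lambda>t. c1 r t - c2 r t)"
    have fine: "finite {t. e t \<noteq> 0}"
      by (rule finite_subset[of _ "{t. c1 r t \<noteq> 0} \<union> {t. c2 r t \<noteq> 0}"]) (use fin1 fin2 in \<open>auto simp: e_def\<close>)
    have ev: "mp_eval e A B al be = mp_eval (c1 r) A B al be - mp_eval (c2 r) A B al be" for A B al be
      unfolding e_def by (rule mp_eval_diff[OF fin1 fin2])
    have D0: "mp_eval e A B al be = 0" if D: "be*A - al*B \<noteq> 0" for A B al be
    proof -
      have "\<forall>q\<le>m. mp_eval (c1 q) A B al be - mp_eval (c2 q) A B al be = 0"
      proof (rule core[OF D Wc])
        fix x y
        show "W x y * (\<Sum>q\<le>m. (mp_eval (c1 q) A B al be - mp_eval (c2 q) A B al be) * (al*x^2 + be*x*y + al*y^2)^(m - q) * (A*x^2 + B*x*y + A*y^2)^q) = 0"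
          using eq1[of be A al B x y, symmetric] eq2[of be A al B x y, symmetric]
          by (simp add: left_diff_distrib sum_subtractf right_diff_distrib)
      qed
      then show ?thesis using False ev by simp
    qed
    have "mp_eval e A B al be = 0" for A B al be
    proof (cases "be*A - al*B = 0")
      case False then show ?thesis by (rule D0)
    next
      case True
      let ?g = "\<lambda>s. mp_eval e (A + s) B al (be + s)"
      have "?g 0 = 0"
      proof (rule cont_zero[of "{0, - (A + be)}" ?g 0])
        fix s assume "s \<notin> {0, - (A + be)}"
        then have s0: "s \<noteq> 0" and s1': "s \<noteq> - (A + be)" by auto
        have s1: "A + be + s \<noteq> 0"
        proof
          assume "A + be + s = 0"
          then have "s + (A + be) = 0" by (simp add: algebra_simps)
          then have "s = - (A + be)" by (simp only: eq_neg_iff_add_eq_0)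
          then show False using s1' by simp
        qed
        have "(be + s)*(A + s) - al*B = (be*A - al*B) + s*(A + be + s)" by (simp add: algebra_simps)
        also have "\<dots> = s*(A + be + s)" using True by simp
        finally have "(be + s)*(A + s) - al*B \<noteq> 0" using s0 s1 by simp
        then show "?g s = 0" by (rule D0)
      next
        show "continuous (at 0) ?g" by (intro cont_mp continuous_intros)
      qed simp
      then show ?thesis by simp
    qed
    then have "e t = 0" by (intro mp_zero[OF fine])
    then show ?thesis unfolding e_def by simp
  qed
qed

lemma swap_tri: "(\<Sum>k\<le>(m::nat). \<Sum>r=k..m. f k r) = (\<Sum>r\<le>m. \<Sum>k\<le>r. f k r)"
proof -
  have "(\<Sum>k\<le>m. \<Sum>r=k..m. f k r) = (\<Sum>k\<in>{..m}. \<Sum>r\<in>{r \<in> {..m}. k \<le> r}. f k r)"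
  proof (rule sum.cong[OF refl])
    fix k have "{k..m} = {r \<in> {..m}. k \<le> r}" by auto
    then show "(\<Sum>r=k..m. f k r) = (\<Sum>r\<in>{r \<in> {..m}. k \<le> r}. f k r)" by simp
  qed
  also have "\<dots> = (\<Sum>r\<in>{..m}. \<Sum>k | k \<in> {..m} \<and> k \<le> r. f k r)"
    by (rule sum.swap_restrict) auto
  also have "\<dots> = (\<Sum>r\<le>m. \<Sum>k\<le>r. f k r)"
  proof (rule sum.cong[OF refl])
    fix r assume "r \<in> {..m}"
    then have "{k. k \<in> {..m} \<and> k \<le> r} = {..r}" by auto
    then show "(\<Sum>k | k \<in> {..m} \<and> k \<le> r. f k r) = (\<Sum>k\<le>r. f k r)" by simp
  qed
  finally show ?thesis .
qed

lemma sumid: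
  fixes \<psi> :: "nat \<Rightarrow> complex" and xi eta p q :: complex
  shows "(\<Sum>k\<le>m. (\<Sum>r=k..m. of_nat (r choose k) * \<psi> r * xi^(m-r) * eta^(r-k)) * q^(m-k) * (xi*p - eta*q)^k)
       = xi^m * (\<Sum>r\<le>m. \<psi> r * q^(m-r) * p^r)"
proof -
  let ?p = "xi*p - eta*q"
  have "(\<Sum>k\<le>m. (\<Sum>r=k..m. of_nat (r choose k) * \<psi> r * xi^(m-r) * eta^(r-k)) * q^(m-k) * ?p^k)
      = (\<Sum>k\<le>m. \<Sum>r=k..m. of_nat (r choose k) * \<psi> r * xi^(m-r) * eta^(r-k) * q^(m-k) * ?p^k)"
    by (simp add: sum_distrib_right)
  also have "\<dots> = (\<Sum>r\<le>m. \<Sum>k\<le>r. of_nat (r choose k) * \<psi> r * xi^(m-r) * eta^(r-k) * q^(m-k) * ?p^k)"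
    by (rule swap_tri)
  also have "\<dots> = (\<Sum>r\<le>m. \<psi> r * xi^(m-r) * q^(m-r) * (\<Sum>k\<le>r. of_nat (r choose k) * ?p^k * (eta*q)^(r-k)))"
  proof (rule sum.cong[OF refl])
    fix r assume r: "r \<in> {..m}"
    have "(\<Sum>k\<le>r. of_nat (r choose k) * \<psi> r * xi^(m-r) * eta^(r-k) * q^(m-k) * ?p^k)
        = (\<Sum>k\<le>r. \<psi> r * xi^(m-r) * q^(m-r) * (of_nat (r choose k) * ?p^k * (eta*q)^(r-k)))"
    proof (rule sum.cong[OF refl])
      fix k assume k: "k \<in> {..r}"
      have "m - k = (m - r) + (r - k)" using r k by auto
      then have "q^(m-k) = q^(m-r) * q^(r-k)" by (simp add: power_add)
      then show "of_nat (r choose k) * \<psi> r * xi^(m-r) * eta^(r-k) * q^(m-k) * ?p^k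
          = \<psi> r * xi^(m-r) * q^(m-r) * (of_nat (r choose k) * ?p^k * (eta*q)^(r-k))"
        by (simp add: power_mult_distrib algebra_simps)
    qed
    then show "(\<Sum>k\<le>r. of_nat (r choose k) * \<psi> r * xi^(m-r) * eta^(r-k) * q^(m-k) * ?p^k)
        = \<psi> r * xi^(m-r) * q^(m-r) * (\<Sum>k\<le>r. of_nat (r choose k) * ?p^k * (eta*q)^(r-k))"
      by (simp add: sum_distrib_left)
  qed
  also have "\<dots> = (\<Sum>r\<le>m. \<psi> r * xi^(m-r) * q^(m-r) * (?p + eta*q)^r)"
    by (rule sum.cong[OF refl]) (simp only: binomial_ring)
  also have "\<dots> = (\<Sum>r\<le>m. xi^m * (\<psi> r * q^(m-r) * p^r))"
  proof (rule sum.cong[OF refl])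
    fix r assume r: "r \<in> {..m}"
    have "xi^(m-r) * xi^r = xi^m" using r by (simp add: power_add[symmetric])
    moreover have "?p + eta*q = xi*p" by simp
    ultimately show "\<psi> r * xi^(m-r) * q^(m-r) * (?p + eta*q)^r = xi^m * (\<psi> r * q^(m-r) * p^r)"
      by (simp add: power_mult_distrib algebra_simps)
  qed
  also have "\<dots> = xi^m * (\<Sum>r\<le>m. \<psi> r * q^(m-r) * p^r)" by (simp add: sum_distrib_left)
  finally show ?thesis .
qed

lemma G3a:
  assumes fam: "gfam m W F c" and Wc: "Wcond W" and D: "be*a - al*b \<noteq> 0" and xi: "xi \<noteq> 0" and k: "k \<le> m"
  shows "(\<Sum>r=k..m. of_nat (r choose k) * mp_eval (c r) a b al be * xi^(m-r) * eta^(r-k))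
       = mp_eval (c k) (a*xi - al*eta) (b*xi - be*eta) al be"
proof -
  define A where "A = a*xi - al*eta"
  define B where "B = b*xi - be*eta"
  define L where "L j = (\<Sum>r=j..m. of_nat (r choose j) * mp_eval (c r) a b al be * xi^(m-r) * eta^(r-j))" for j
  have D': "be*A - al*B = xi*(be*a - al*b)" unfolding A_def B_def by (simp add: algebra_simps)
  have D'0: "be*A - al*B \<noteq> 0" using D' D xi by simp
  have eq: "(be*a - al*b)^m * F x y = W x y * (\<Sum>r\<le>m. mp_eval (c r) a b al be * (al*x^2 + be*x*y + al*y^2)^(m - r) * (a*x^2 + b*x*y + a*y^2)^r)" for a b x y
    using fam unfolding gfam_def by blast
  have "\<forall>r\<le>m. L r - mp_eval (c r) A B al be = 0"
  proof (rule core[OF D'0 Wc])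
    fix x y
    let ?Q = "al*x^2 + be*x*y + al*y^2" and ?P = "a*x^2 + b*x*y + a*y^2"
    have P': "A*x^2 + B*x*y + A*y^2 = xi * ?P - eta * ?Q" unfolding A_def B_def by (simp add: algebra_simps)
    have s1: "(\<Sum>r\<le>m. L r * ?Q^(m-r) * (A*x^2 + B*x*y + A*y^2)^r) = xi^m * (\<Sum>r\<le>m. mp_eval (c r) a b al be * ?Q^(m-r) * ?P^r)"
      unfolding P' L_def by (rule sumid)
    have "W x y * (\<Sum>r\<le>m. (L r - mp_eval (c r) A B al be) * ?Q^(m-r) * (A*x^2 + B*x*y + A*y^2)^r)
        = W x y * (\<Sum>r\<le>m. L r * ?Q^(m-r) * (A*x^2 + B*x*y + A*y^2)^r)
          - W x y * (\<Sum>r\<le>m. mp_eval (c r) A B al be * ?Q^(m-r) * (A*x^2 + B*x*y + A*y^2)^r)"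
      by (simp add: left_diff_distrib sum_subtractf right_diff_distrib)
    also have "\<dots> = xi^m * ((be*a - al*b)^m * F x y) - (be*A - al*B)^m * F x y"
      unfolding s1 eq[of a b x y] eq[of A B x y] by (simp add: algebra_simps)
    also have "\<dots> = 0" unfolding D' by (simp add: power_mult_distrib)
    finally show "W x y * (\<Sum>r\<le>m. (L r - mp_eval (c r) A B al be) * ?Q^(m-r) * (A*x^2 + B*x*y + A*y^2)^r) = 0" .
  qed
  then show ?thesis using k unfolding L_def A_def B_def by simp
qed

lemma G3:
  assumes fam: "gfam m W F c" and Wc: "Wcond W" and D: "be*a - al*b \<noteq> 0" and k: "k \<le> m"
  shows "(\<Sum>r=k..m. of_nat (r choose k) * mp_eval (c r) a b al be * xi^(m-r) * eta^(r-k))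
       = mp_eval (c k) (a*xi - al*eta) (b*xi - be*eta) al be"
proof (cases "xi = 0")
  case False then show ?thesis using G3a[OF fam Wc D False k] by simp
next
  case True
  let ?g = "\<lambda>t. (\<Sum>r=k..m. of_nat (r choose k) * mp_eval (c r) a b al be * t^(m-r) * eta^(r-k))
       - mp_eval (c k) (a*t - al*eta) (b*t - be*eta) al be"
  have "?g 0 = 0"
  proof (rule cont_zero[of "{0}" ?g 0])
    fix t :: complex assume "t \<notin> {0}"
    then show "?g t = 0" using G3a[OF fam Wc D _ k, of t eta] by simp
  next
    show "continuous (at 0) ?g" by (intro continuous_intros cont_mp)
  qed simp
  then show ?thesis using True by simp
qed

lemma W1u: "Wm 1 (\<lambda>x y. x^2 + y^2)" using Wm_u[OF Wm_const[of 1]] by simp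
lemma W1v: "Wm 1 (\<lambda>x y. x*y)" using Wm_v[OF Wm_const[of 1]] by simp
lemma W0one: "Wm 0 (\<lambda>x y. 1)" using Wm_const[of 1] by simp
lemma W0two: "Wm 0 (\<lambda>x y. 2)" using Wm_const[of 2] by simp

lemma rec_gen:
  fixes x y z :: complex
  shows "z * (x^2)^(Suc (Suc m)) + w * (y^2)^(Suc (Suc m)) =
    (x^2+y^2) * (z * (x^2)^(Suc m) + w * (y^2)^(Suc m)) - (x*y) * ((x*y) * (z * (x^2)^m + w * (y^2)^m))"
  by (simp add: power2_eq_square algebra_simps)

lemma Psi_ex1: "\<exists>!c. is_Psi_family n c"
proof -
  have Wc: "Wcond (\<lambda>x y. (x+y)^(n mod 2))" by (simp add: Wcond_def)
  have ex: "\<exists>c. gfam (n div 2) (\<lambda>x y. (x+y)^(n mod 2)) (\<lambda>x y. x^n+y^n) c"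
  proof (cases "even n")
    case True
    then obtain m where n: "n = 2*m" by (auto elim: evenE)
    have "Wm m (lrec (\<lambda>x y. 2) (\<lambda>x y. x^2+y^2) m)" by (rule Wm_lrec[OF W0two W1u])
    moreover have "x^n + y^n = (x+y)^(n mod 2) * lrec (\<lambda>x y. 2) (\<lambda>x y. x^2+y^2) m x y" for x y :: complex
    proof -
      have "1 * (x^2)^m + 1 * (y^2)^m = 1 * lrec (\<lambda>x y. 2) (\<lambda>x y. x^2+y^2) m x y"
        by (rule lrec_eq[where A="\<lambda>m. 1 * (x^2)^m + 1 * (y^2)^m"]) (simp_all only: rec_gen, simp_all)
      then show ?thesis using n by (simp add: power_mult)
    qed
    ultimately show ?thesis using n gfam_ex by simp
  next
    case False
    then obtain m where n: "n = 2*m + 1" using oddE by blast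
    have "Wm m (lrec (\<lambda>x y. 1) (\<lambda>x y. x^2+y^2 - x*y) m)" by (rule Wm_lrec[OF W0one Wm_diff[OF W1u W1v]])
    moreover have "x^n + y^n = (x+y)^(n mod 2) * lrec (\<lambda>x y. 1) (\<lambda>x y. x^2+y^2 - x*y) m x y" for x y :: complex
    proof -
      have "x * (x^2)^m + y * (y^2)^m = (x+y) * lrec (\<lambda>x y. 1) (\<lambda>x y. x^2+y^2 - x*y) m x y"
        by (rule lrec_eq[where A="\<lambda>m. x * (x^2)^m + y * (y^2)^m"]) (simp_all only: rec_gen, simp_all add: power2_eq_square algebra_simps)
      then show ?thesis using n by (simp add: power_mult)
    qed
    ultimately show ?thesis using n gfam_ex by simp
  qed
  then obtain c where c: "gfam (n div 2) (\<lambda>x y. (x+y)^(n mod 2)) (\<lambda>x y. x^n+y^n) c" by blast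
  show ?thesis unfolding Psi_gfam
    by (rule ex1I[of _ c]) (use c gfam_unique[OF _ _ Wc] in auto)
qed

lemma Phi_ex1: assumes "n \<ge> 1" shows "\<exists>!c. is_Phi_family n c"
proof -
  have Wc: "Wcond (\<lambda>x y. (x - y) * (x+y)^((n - 1) mod 2))" by (simp add: Wcond_def)
  have ex: "\<exists>c. gfam ((n - 1) div 2) (\<lambda>x y. (x - y) * (x+y)^((n - 1) mod 2)) (\<lambda>x y. x^n - y^n) c"
  proof (cases "even n")
    case False
    then obtain m where n: "n = 2*m + 1" using oddE by blast
    have "Wm m (lrec (\<lambda>x y. 1) (\<lambda>x y. x^2+y^2 + x*y) m)" by (rule Wm_lrec[OF W0one Wm_add[OF W1u W1v]])
    moreover have "x^n - y^n = (x - y) * (x+y)^((n - 1) mod 2) * lrec (\<lambda>x y. 1) (\<lambda>x y. x^2+y^2 + x*y) m x y" for x y :: complex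
    proof -
      have "x * (x^2)^m + (-y) * (y^2)^m = (x - y) * lrec (\<lambda>x y. 1) (\<lambda>x y. x^2+y^2 + x*y) m x y"
        by (rule lrec_eq[where A="\<lambda>m. x * (x^2)^m + (-y) * (y^2)^m"]) (simp_all only: rec_gen, simp_all add: power2_eq_square algebra_simps)
      then show ?thesis using n by (simp add: power_mult)
    qed
    ultimately show ?thesis using n gfam_ex by simp
  next
    case True
    then obtain m0 where n0: "n = 2*m0" by (auto elim: evenE)
    with assms obtain m where n: "n = 2*m + 2" by (cases m0) auto
    have n1: "n - 1 = 2*m + 1" using n by simp
    have "Wm m (lrec (\<lambda>x y. 1) (\<lambda>x y. x^2+y^2) m)" by (rule Wm_lrec[OF W0one W1u])
    moreover have "x^n - y^n = (x - y) * (x+y)^((n - 1) mod 2) * lrec (\<lambda>x y. 1) (\<lambda>x y. x^2+y^2) m x y" for x y :: complex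
    proof -
      have "x^2 * (x^2)^m + (- (y^2)) * (y^2)^m = ((x - y) * (x + y)) * lrec (\<lambda>x y. 1) (\<lambda>x y. x^2+y^2) m x y"
        by (rule lrec_eq[where A="\<lambda>m. x^2 * (x^2)^m + (- (y^2)) * (y^2)^m"]) (simp_all only: rec_gen, simp_all add: power2_eq_square algebra_simps)
      moreover have "x^n = x^2 * (x^2)^m" "y^n = y^2 * (y^2)^m" using n by (simp_all add: power_mult[symmetric] power_add[symmetric])
      ultimately show ?thesis using n1 by simp
    qed
    ultimately show ?thesis using n n1 gfam_ex by simp
  qed
  then obtain c where c: "gfam ((n - 1) div 2) (\<lambda>x y. (x - y) * (x+y)^((n - 1) mod 2)) (\<lambda>x y. x^n - y^n) c" by blast
  show ?thesis unfolding Phi_gfam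
    by (rule ex1I[of _ c]) (use c gfam_unique[OF _ _ Wc] in auto)
qed

theorem theorem10p6:
  fixes a b al be xi eta :: complex and n k :: nat
  assumes "be*a - al*b \<noteq> 0" and "n \<ge> 1"
  shows "(k \<le> n div 2 \<longrightarrow>
           (\<Sum>r=k..n div 2. of_nat (r choose k) * Psi n r a b al be * xi^(n div 2 - r) * eta^(r - k))
           = Psi n k (a*xi - al*eta) (b*xi - be*eta) al be)
       \<and> (k \<le> (n - 1) div 2 \<longrightarrow>
           (\<Sum>r=k..(n - 1) div 2. of_nat (r choose k) * Phi n r a b al be * xi^((n - 1) div 2 - r) * eta^(r - k))
           = Phi n k (a*xi - al*eta) (b*xi - be*eta) al be)"
proof -
  have WcP: "Wcond (\<lambda>x y. (x+y)^(n mod 2))" by (simp add: Wcond_def)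
  have WcF: "Wcond (\<lambda>x y. (x - y) * (x+y)^((n - 1) mod 2))" by (simp add: Wcond_def)
  have P: "gfam (n div 2) (\<lambda>x y. (x+y)^(n mod 2)) (\<lambda>x y. x^n+y^n) (THE c. is_Psi_family n c)"
    using theI'[OF Psi_ex1[of n]] unfolding Psi_gfam .
  have F: "gfam ((n - 1) div 2) (\<lambda>x y. (x - y) * (x+y)^((n - 1) mod 2)) (\<lambda>x y. x^n - y^n) (THE c. is_Phi_family n c)"
    using theI'[OF Phi_ex1[OF assms(2)]] unfolding Phi_gfam .
  show ?thesis
  proof (intro conjI impI)
    assume k: "k \<le> n div 2"
    show "(\<Sum>r=k..n div 2. of_nat (r choose k) * Psi n r a b al be * xi^(n div 2 - r) * eta^(r - k))
           = Psi n k (a*xi - al*eta) (b*xi - be*eta) al be"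
      unfolding Psi_def by (rule G3[OF P WcP assms(1) k])
  next
    assume k: "k \<le> (n - 1) div 2"
    show "(\<Sum>r=k..(n - 1) div 2. of_nat (r choose k) * Phi n r a b al be * xi^((n - 1) div 2 - r) * eta^(r - k))
           = Phi n k (a*xi - al*eta) (b*xi - be*eta) al be"
      unfolding Phi_def by (rule G3[OF F WcF assms(1) k])
  qed
qed

end
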